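(* Let $(\Re,S,V)$ be a vector $S$-metric space and let $H,K,P,Q:\Re\to\Re$ be four maps satisfying: (a) the pairs $(H,P)$ and $(K,Q)$ satisfy the $CLR_{(P,Q)}$ property, i.e. there exist sequences $(x_n)$, $(y_n)$ in $\Re$ and points $\xi,a,b\in\Re$ such that $Hx_n\to\xi$, $Px_n\to\xi$, $Ky_n\to\xi$, $Qy_n\to\xi$ (convergence in $(\Re,S,V)$) and $\xi=Pa=Qb$; (b) the pairs $(H,P)$ and $(K,Q)$ are weakly compatible; (c) there is $\rho\in[0,1)$ such that for all $x,y,z\in\Re$, $$S(Hx,Hy,Kz)\preceq \rho\, U(x,y,z),$$ where $$U(x,y,z)=\max\Big[S(Px,Py,Qz),\ S(Px,Px,Hx),\ S(Qz,Qz,Kz),\ \tfrac12\{S(Px,Py,Kz)+S(Qz,Qz,Hx)\}\Big]$$ (the maximum being the supremum in $V$). Then $H,K,P,Q$ have a unique common fixed point in $\Re$, i.e. there is exactly one $\xi\in\Re$ with $H\xi=K\xi=P\xi=Q\xi=\xi$.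
   Context: A vector lattice (Riesz space) $V$ is an ordered real vector space whose order $\preceq$ is a lattice order; $\max$ of finitely many elements of $V$ denotes their supremum. Given a vector lattice $V$ and a nonempty set $\Re$, a vector $S$-metric is a map $S:\Re^3\to V$ such that for all $x_1,x_2,x_3,\alpha\in\Re$: (a) $S(x_1,x_2,x_3)\succeq 0$; (b) $S(x_1,x_2,x_3)=0$ iff $x_1=x_2=x_3$; (c) $S(x_1,x_2,x_3)\preceq S(x_1,x_2,\alpha)+S(x_2,x_2,\alpha)+S(x_3,x_3,\alpha)$. The triple $(\Re,S,V)$ is a vector $S$-metric space. A sequence $(x_n)$ in $\Re$ converges to $x\in\Re$ if there is a sequence $(c_n)$ in $V$ decreasing with infimum $0$ such that $S(x_n,x_n,x)\preceq c_n$ for all $n$. Two maps $A,B:\Re\to\Re$ are weakly compatible if $ABx=BAx$ whenever $Ax=Bx$, $x\in\Re$. *)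

theory Defs
  imports Main "HOL-Analysis.Analysis"
begin

text \<open>A vector lattice (Riesz space) is modelled by a type of class
  ordered_real_vector together with lattice (same order).
  The underlying nonempty set is modelled by the type 'a.\<close>

definition vector_S_metric :: "('a \<Rightarrow> 'a \<Rightarrow> 'a \<Rightarrow> 'v::{ordered_real_vector,lattice}) \<Rightarrow> bool" where
  "vector_S_metric S \<longleftrightarrow>
     (\<forall>x1 x2 x3. 0 \<le> S x1 x2 x3) \<and>
     (\<forall>x1 x2 x3. S x1 x2 x3 = 0 \<longleftrightarrow> (x1 = x2 \<and> x2 = x3)) \<and>
     (\<forall>x1 x2 x3 a. S x1 x2 x3 \<le> S x1 x2 a + S x2 x2 a + S x3 x3 a)"

definition decr_to_zero :: "(nat \<Rightarrow> 'v::{ordered_real_vector,lattice}) \<Rightarrow> bool" where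
  "decr_to_zero c \<longleftrightarrow> (\<forall>n. c (Suc n) \<le> c n) \<and>
     (\<forall>n. 0 \<le> c n) \<and> (\<forall>l. (\<forall>n. l \<le> c n) \<longrightarrow> l \<le> 0)"

definition S_converges ::
  "('a \<Rightarrow> 'a \<Rightarrow> 'a \<Rightarrow> 'v::{ordered_real_vector,lattice}) \<Rightarrow> (nat \<Rightarrow> 'a) \<Rightarrow> 'a \<Rightarrow> bool" where
  "S_converges S x l \<longleftrightarrow> (\<exists>c. decr_to_zero c \<and> (\<forall>n. S (x n) (x n) l \<le> c n))"

definition weakly_compatible :: "('a \<Rightarrow> 'a) \<Rightarrow> ('a \<Rightarrow> 'a) \<Rightarrow> bool" where
  "weakly_compatible A B \<longleftrightarrow> (\<forall>x. A x = B x \<longrightarrow> A (B x) = B (A x))"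

definition CLR_PQ ::
  "('a \<Rightarrow> 'a \<Rightarrow> 'a \<Rightarrow> 'v::{ordered_real_vector,lattice}) \<Rightarrow> ('a \<Rightarrow> 'a) \<Rightarrow> ('a \<Rightarrow> 'a) \<Rightarrow> ('a \<Rightarrow> 'a) \<Rightarrow> ('a \<Rightarrow> 'a) \<Rightarrow> bool" where
  "CLR_PQ S H P K Q \<longleftrightarrow> (\<exists>x y \<xi> a b.
     S_converges S (\<lambda>n. H (x n)) \<xi> \<and> S_converges S (\<lambda>n. P (x n)) \<xi> \<and>
     S_converges S (\<lambda>n. K (y n)) \<xi> \<and> S_converges S (\<lambda>n. Q (y n)) \<xi> \<and>
     \<xi> = P a \<and> \<xi> = Q b)"

end

theory Submission
  imports Defs
begin

lemma pos_scale_nonpos: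
  fixes d :: "'v::ordered_real_vector"
  assumes "0 < k" "k *\<^sub>R d \<le> 0"
  shows "d \<le> 0"
proof -
  have "(1/k) *\<^sub>R (k *\<^sub>R d) \<le> (1/k) *\<^sub>R 0"
    using assms by (intro scaleR_left_mono) auto
  thus ?thesis using assms(1) by simp
qed

lemma contr_zero:
  fixes D :: "'v::ordered_real_vector"
  assumes "0 \<le> D" "D \<le> \<rho> *\<^sub>R D" "\<rho> < 1"
  shows "D = 0"
proof -
  have "(1 - \<rho>) *\<^sub>R D = D - \<rho> *\<^sub>R D" by (simp add: scaleR_diff_left)
  also have "\<dots> \<le> 0" using assms(2) by simp
  finally have "D \<le> 0" using pos_scale_nonpos[of "1 - \<rho>" D] assms(3) by simp
  thus ?thesis using assms(1) by simp
qed

lemma dz_inf: "decr_to_zero c \<Longrightarrow> (\<And>n. l \<le> c n) \<Longrightarrow> l \<le> 0"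
  unfolding decr_to_zero_def by blast

lemma dz_step: "decr_to_zero c \<Longrightarrow> c (Suc n) \<le> c n"
  unfolding decr_to_zero_def by blast

lemma dz_nn: "decr_to_zero c \<Longrightarrow> 0 \<le> c n"
  unfolding decr_to_zero_def by blast

lemma dz_anti: assumes "decr_to_zero c" "m \<le> n" shows "c n \<le> c m"
  using lift_Suc_antimono_le[of c, OF dz_step[OF assms(1)] assms(2)] .

lemma dz_scale:
  assumes "decr_to_zero c" "0 \<le> k"
  shows "decr_to_zero (\<lambda>n. k *\<^sub>R c n)"
  unfolding decr_to_zero_def
proof (intro conjI allI impI)
  fix n show "k *\<^sub>R c (Suc n) \<le> k *\<^sub>R c n"
    using dz_step[OF assms(1)] assms(2) by (rule scaleR_left_mono)
next
  fix n show "0 \<le> k *\<^sub>R c n"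
    using assms(2) dz_nn[OF assms(1)] by (rule scaleR_nonneg_nonneg)
next
  fix l assume l: "\<forall>n. l \<le> k *\<^sub>R c n"
  show "l \<le> 0"
  proof (cases "k = 0")
    case True thus ?thesis using l by simp
  next
    case False
    hence kp: "0 < k" using assms by simp
    have "\<forall>n. (1/k) *\<^sub>R l \<le> c n"
    proof
      fix n
      have "(1/k) *\<^sub>R l \<le> (1/k) *\<^sub>R (k *\<^sub>R c n)"
        using l kp by (intro scaleR_left_mono) auto
      thus "(1/k) *\<^sub>R l \<le> c n" using kp by simp
    qed
    hence "(1/k) *\<^sub>R l \<le> 0" using dz_inf[OF assms(1)] by blast
    hence "k *\<^sub>R ((1/k) *\<^sub>R l) \<le> k *\<^sub>R 0" using kp by (intro scaleR_left_mono) auto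
    thus ?thesis using kp by simp
  qed
qed

lemma dz_add:
  assumes c: "decr_to_zero c" and e: "decr_to_zero e"
  shows "decr_to_zero (\<lambda>n. c n + e n)"
  unfolding decr_to_zero_def
proof (intro conjI allI impI)
  fix n show "c (Suc n) + e (Suc n) \<le> c n + e n"
    using dz_step[OF c] dz_step[OF e] by (rule add_mono)
next
  fix n show "0 \<le> c n + e n"
    using dz_nn[OF c] dz_nn[OF e] by (rule add_nonneg_nonneg)
next
  fix l assume l: "\<forall>n. l \<le> c n + e n"
  have cm: "\<And>m n. m \<le> n \<Longrightarrow> c n \<le> c m"
    using c by (rule dz_anti)
  have em: "\<And>m n. m \<le> n \<Longrightarrow> e n \<le> e m"
    using e by (rule dz_anti)
  have "\<forall>m. l \<le> c m"
  proof
    fix m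
    have "\<forall>n. l - c m \<le> e n"
    proof
      fix n
      show "l - c m \<le> e n"
      proof (cases "m \<le> n")
        case True
        have "l \<le> c n + e n" using l by blast
        also have "\<dots> \<le> c m + e n" using cm[OF True] by simp
        finally show ?thesis by (simp add: algebra_simps)
      next
        case False
        have "l \<le> c m + e m" using l by blast
        also have "\<dots> \<le> c m + e n" using em[of n m] False by simp
        finally show ?thesis by (simp add: algebra_simps)
      qed
    qed
    hence "l - c m \<le> 0" using dz_inf[OF e] by blast
    thus "l \<le> c m" by simp
  qed
  thus "l \<le> 0" using dz_inf[OF c] by blast
qed

lemma half_le:
  fixes X :: "'v::ordered_real_vector"
  assumes "0 \<le> X" shows "(1/2) *\<^sub>R X \<le> X"
proof -
  have "(1/2) *\<^sub>R X \<le> 1 *\<^sub>R X" using assms by (intro scaleR_right_mono) auto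
  thus ?thesis by simp
qed

context
  fixes S :: "'a \<Rightarrow> 'a \<Rightarrow> 'a \<Rightarrow> 'v::{ordered_real_vector,lattice}"
  assumes VS: "vector_S_metric S"
begin

lemma S_nn: "0 \<le> S x y z" using VS unfolding vector_S_metric_def by simp
lemma S_zero: "S x x x = 0" using VS unfolding vector_S_metric_def by simp
lemma S_eq0: "S x y z = 0 \<longleftrightarrow> x = y \<and> y = z" using VS unfolding vector_S_metric_def by simp
lemma S_tri: "S x1 x2 x3 \<le> S x1 x2 a + S x2 x2 a + S x3 x3 a"
  using VS unfolding vector_S_metric_def by simp

lemma S_sym_le: "S x x y \<le> S y y x"
  using S_tri[of x x y x] by (simp add: S_zero)
lemma S_sym: "S x x y = S y y x"
  using S_sym_le[of x y] S_sym_le[of y x] by (rule antisym)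
lemma S_tri2: "S x x z \<le> S x x y + S x x y + S z z y"
  using S_tri[of x x z y] by simp

end

theorem theorem2p1:
  fixes S :: "'a \<Rightarrow> 'a \<Rightarrow> 'a \<Rightarrow> 'v::{ordered_real_vector,lattice}"
    and H K P Q :: "'a \<Rightarrow> 'a" and \<rho> :: real
  assumes "vector_S_metric S"
    and "CLR_PQ S H P K Q"
    and "weakly_compatible H P" and "weakly_compatible K Q"
    and "0 \<le> \<rho>" and "\<rho> < 1"
    and "\<forall>x y z. S (H x) (H y) (K z) \<le> \<rho> *\<^sub>R
           sup (S (P x) (P y) (Q z))
             (sup (S (P x) (P x) (H x))
               (sup (S (Q z) (Q z) (K z))
                 ((1/2) *\<^sub>R (S (P x) (P y) (K z) + S (Q z) (Q z) (H x)))))"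
  shows "\<exists>!\<xi>. H \<xi> = \<xi> \<and> K \<xi> = \<xi> \<and> P \<xi> = \<xi> \<and> Q \<xi> = \<xi>"
proof -
  note VS = assms(1)
  note nn = S_nn[OF VS] and zero = S_zero[OF VS] and eq0 = S_eq0[OF VS]
    and sym = S_sym[OF VS] and tri2 = S_tri2[OF VS]
  note C = assms(7)
  from assms(2) obtain x y \<xi> a b where
    cQ: "S_converges S (\<lambda>n. Q (y n)) \<xi>" and cK: "S_converges S (\<lambda>n. K (y n)) \<xi>"
    and Pa: "\<xi> = P a" and Qb: "\<xi> = Q b"
    unfolding CLR_PQ_def by blast
  from cQ obtain c where c: "decr_to_zero c" "\<forall>n. S (Q (y n)) (Q (y n)) \<xi> \<le> c n"
    unfolding S_converges_def by blast
  from cK obtain e where e: "decr_to_zero e" "\<forall>n. S (K (y n)) (K (y n)) \<xi> \<le> e n"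
    unfolding S_converges_def by blast
  have c0: "\<And>n. 0 \<le> c n" and e0: "\<And>n. 0 \<le> e n" using c(1) e(1) by (auto intro: dz_nn)
  define u where "u = H a"
  define d where "d = S u u \<xi>"
  have d0: "0 \<le> d" unfolding d_def by (rule nn)
  define w where "w = (\<lambda>n. (e n + e n) + \<rho> *\<^sub>R (c n + c n + e n))"
  have wdz: "decr_to_zero w" unfolding w_def
    using assms(5) by (intro dz_add dz_scale c e) auto
  have bnd: "(1 - \<rho>) *\<^sub>R d \<le> w n" for n
  proof -
    let ?q = "Q (y n)" and ?k = "K (y n)"
    have q: "S ?q ?q \<xi> \<le> c n" and k: "S ?k ?k \<xi> \<le> e n" using c e by auto
    have qk: "S ?q ?q ?k \<le> c n + c n + e n" using tri2[of ?q ?k \<xi>] q k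
      by (meson add_mono order_trans)
    have qu: "S ?q ?q u \<le> c n + c n + d" using tri2[of ?q u \<xi>] q
      unfolding d_def by (metis add_mono order_trans order_refl)
    let ?T = "d + (c n + c n + e n)"
    have T0: "0 \<le> c n + c n + e n" using c0 e0 by (simp add: add_nonneg_nonneg)
    have m1: "S \<xi> \<xi> ?q \<le> ?T"
    proof -
      have "S \<xi> \<xi> ?q \<le> c n" using q sym by metis
      also have "\<dots> \<le> ?T" using d0 c0 e0
        by (metis add_increasing add_increasing2 order_refl)
      finally show ?thesis .
    qed
    have m2: "S \<xi> \<xi> u \<le> ?T" using sym d_def T0 by (metis add_increasing2 order_refl)
    have m3: "S ?q ?q ?k \<le> ?T" using qk d0 by (metis add_increasing)
    have m4: "(1/2) *\<^sub>R (S \<xi> \<xi> ?k + S ?q ?q u) \<le> ?T"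
    proof -
      have "S \<xi> \<xi> ?k \<le> e n" using k sym by metis
      hence "S \<xi> \<xi> ?k + S ?q ?q u \<le> e n + (c n + c n + d)" using qu by (rule add_mono)
      also have "\<dots> = ?T" by (simp add: algebra_simps)
      finally have X: "S \<xi> \<xi> ?k + S ?q ?q u \<le> ?T" .
      have "(1/2) *\<^sub>R (S \<xi> \<xi> ?k + S ?q ?q u) \<le> S \<xi> \<xi> ?k + S ?q ?q u"
        by (rule half_le) (simp add: nn add_nonneg_nonneg)
      thus ?thesis using X by simp
    qed
    have "S u u ?k \<le> \<rho> *\<^sub>R sup (S \<xi> \<xi> ?q) (sup (S \<xi> \<xi> u) (sup (S ?q ?q ?k)
          ((1/2) *\<^sub>R (S \<xi> \<xi> ?k + S ?q ?q u))))"
      using C[rule_format, of a a "y n"] unfolding u_def Pa by simp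
    also have "\<dots> \<le> \<rho> *\<^sub>R ?T" using m1 m2 m3 m4 assms(5)
      by (intro scaleR_left_mono) auto
    finally have uk: "S u u ?k \<le> \<rho> *\<^sub>R ?T" .
    have "d \<le> S \<xi> \<xi> ?k + S \<xi> \<xi> ?k + S u u ?k" unfolding d_def
      using tri2[of \<xi> u ?k] sym by metis
    also have "\<dots> \<le> e n + e n + \<rho> *\<^sub>R ?T"
      using k sym uk by (metis add_mono)
    finally have "d \<le> e n + e n + \<rho> *\<^sub>R ?T" .
    hence "d - \<rho> *\<^sub>R d \<le> e n + e n + \<rho> *\<^sub>R (c n + c n + e n)"
      by (simp add: scaleR_right_distrib algebra_simps)
    thus ?thesis unfolding w_def by (simp add: scaleR_diff_left)
  qed
  have "(1 - \<rho>) *\<^sub>R d \<le> 0" using wdz bnd by (rule dz_inf)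
  moreover have "0 < 1 - \<rho>" using assms(6) by simp
  ultimately have "d \<le> 0" using pos_scale_nonpos by blast
  hence "d = 0" using d0 by simp
  hence Ha: "H a = \<xi>" unfolding d_def u_def using eq0 by simp
  have HP: "H \<xi> = P \<xi>" using assms(3) Ha Pa unfolding weakly_compatible_def by metis
  have Kb: "K b = \<xi>"
  proof -
    let ?D = "S \<xi> \<xi> (K b)"
    have "?D \<le> \<rho> *\<^sub>R sup (S \<xi> \<xi> \<xi>) (sup (S \<xi> \<xi> \<xi>) (sup (S \<xi> \<xi> (K b))
          ((1/2) *\<^sub>R (S \<xi> \<xi> (K b) + S \<xi> \<xi> \<xi>))))"
      using C[rule_format, of a a b] Ha Pa Qb by simp
    also have "\<dots> \<le> \<rho> *\<^sub>R ?D" using assms(5) zero nn half_le[OF nn]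
      by (intro scaleR_left_mono) auto
    finally have "?D = 0" using contr_zero[OF nn _ assms(6)] by blast
    thus ?thesis using eq0 by simp
  qed
  have KQ: "K \<xi> = Q \<xi>" using assms(4) Kb Qb unfolding weakly_compatible_def by metis
  have Hx: "H \<xi> = \<xi>"
  proof -
    let ?D = "S (H \<xi>) (H \<xi>) \<xi>"
    have "?D \<le> \<rho> *\<^sub>R sup ?D (sup (S (H \<xi>) (H \<xi>) (H \<xi>)) (sup (S \<xi> \<xi> \<xi>)
          ((1/2) *\<^sub>R (?D + S \<xi> \<xi> (H \<xi>)))))"
      using C[rule_format, of \<xi> \<xi> b] HP Kb Qb by simp
    also have "\<dots> \<le> \<rho> *\<^sub>R ?D" using assms(5) zero nn sym[of \<xi> "H \<xi>"]
      half_le[OF nn, of "H \<xi>" "H \<xi>" \<xi>]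
      by (intro scaleR_left_mono) (auto simp: scaleR_2[symmetric])
    finally have "?D = 0" using contr_zero[OF nn _ assms(6)] by blast
    thus ?thesis using eq0 by simp
  qed
  have Kx: "K \<xi> = \<xi>"
  proof -
    let ?D = "S \<xi> \<xi> (K \<xi>)"
    have "?D \<le> \<rho> *\<^sub>R sup ?D (sup (S \<xi> \<xi> \<xi>) (sup (S (K \<xi>) (K \<xi>) (K \<xi>))
          ((1/2) *\<^sub>R (?D + S (K \<xi>) (K \<xi>) \<xi>))))"
      using C[rule_format, of a a \<xi>] Ha Pa KQ by simp
    also have "\<dots> \<le> \<rho> *\<^sub>R ?D" using assms(5) zero nn sym[of \<xi> "K \<xi>"]
      half_le[OF nn, of \<xi> \<xi> "K \<xi>"]
      by (intro scaleR_left_mono) (auto simp: scaleR_2[symmetric])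
    finally have "?D = 0" using contr_zero[OF nn _ assms(6)] by blast
    thus ?thesis using eq0 by simp
  qed
  have ex: "H \<xi> = \<xi> \<and> K \<xi> = \<xi> \<and> P \<xi> = \<xi> \<and> Q \<xi> = \<xi>" using Hx Kx HP KQ by simp
  show ?thesis
  proof (rule ex1I[of _ \<xi>])
    show "H \<xi> = \<xi> \<and> K \<xi> = \<xi> \<and> P \<xi> = \<xi> \<and> Q \<xi> = \<xi>" by (rule ex)
  next
    fix \<eta> assume h: "H \<eta> = \<eta> \<and> K \<eta> = \<eta> \<and> P \<eta> = \<eta> \<and> Q \<eta> = \<eta>"
    let ?D = "S \<eta> \<eta> \<xi>"
    have "?D \<le> \<rho> *\<^sub>R sup ?D (sup (S \<eta> \<eta> \<eta>) (sup (S \<xi> \<xi> \<xi>)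
          ((1/2) *\<^sub>R (?D + S \<xi> \<xi> \<eta>))))"
      using C[rule_format, of \<eta> \<eta> \<xi>] h ex by simp
    also have "\<dots> \<le> \<rho> *\<^sub>R ?D" using assms(5) zero nn sym[of \<xi> \<eta>]
      half_le[OF nn, of \<eta> \<eta> \<xi>]
      by (intro scaleR_left_mono) (auto simp: scaleR_2[symmetric])
    finally have "?D = 0" using contr_zero[OF nn _ assms(6)] by blast
    thus "\<eta> = \<xi>" using eq0 by simp
  qed
qed

end
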